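(* Let $T$ be a complete theory with monster model $\mathfrak{C}$. Suppose there are a formula $\phi(x,y)$ and a strongly indiscernible tree $(a_\eta)_{\eta\in 2^{<\omega}}$ in $\mathfrak{C}$ such that the set $\{\phi(x,a_{0^n}):n<\omega\}$ has infinitely many realizations in $\mathfrak{C}$, while the formula $\phi(x,a_{\langle 0\rangle})\wedge\phi(x,a_{\langle 1\rangle})$ has only finitely many realizations in $\mathfrak{C}$. Then $T$ has SOP$_2$.
   Context: Here $0^n\in 2^{<\omega}$ denotes the sequence of $n$ zeros, and $\langle 0\rangle,\langle 1\rangle$ are the sequences of length one. Let $\mathcal{L}_0=\{\triangleleft,<_{lex},\wedge\}$ and view $2^{<\omega}$ as an $\mathcal{L}_0$-structure with $\triangleleft$ the prefix (initial segment) order, $<_{lex}$ the lexicographic order, and $\wedge$ the meet (longest common initial segment). A tree $(a_\eta)_{\eta\in S}$ is strongly indiscernible (over $C$) if whenever $\mathrm{qftp}_{\mathcal{L}_0}(\eta_0,\dots,\eta_{n-1})=\mathrm{qftp}_{\mathcal{L}_0}(\nu_0,\dots,\nu_{n-1})$ we have $\mathrm{tp}(a_{\eta_0},\dots,a_{\eta_{n-1}}/C)=\mathrm{tp}(a_{\nu_0},\dots,a_{\nu_{n-1}}/C)$. A formula $\phi(x;y)$ has SOP$_2$ if there are tuples $(b_\eta)_{\eta\in 2^{<\omega}}$ such that for every $\xi\in 2^\omega$ the set $\{\phi(x,b_{\xi|n}):n<\omega\}$ is consistent, and for every pair of $\triangleleft$-incomparable $\eta,\nu$ the formula $\phi(x,b_\eta)\wedge\phi(x,b_\nu)$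 is inconsistent; $T$ has SOP$_2$ if some formula does. *)

theory Defs
  imports Main "HOL-Library.Sublist"
begin

text \<open>Terms and formulas of a first-order language with function symbols of type 'f
and relation symbols of type 'r (symbols may be applied to argument lists; a symbol used
at different arities is treated as distinct symbols of those arities).\<close>

datatype 'f trm = Var nat | Fn 'f "'f trm list"

datatype ('f, 'r) fm =
    FEq "'f trm" "'f trm"
  | FRel 'r "'f trm list"
  | FNeg "('f, 'r) fm"
  | FConj "('f, 'r) fm" "('f, 'r) fm"
  | FEx nat "('f, 'r) fm"

primrec fvt :: "'f trm \<Rightarrow> nat set" where
  "fvt (Var n) = {n}"
| "fvt (Fn f ts) = \<Union> (set (map fvt ts))"

primrec fv :: "('f, 'r) fm \<Rightarrow> nat set" where
  "fv (FEq s t) = fvt s \<union> fvt t"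
| "fv (FRel r ts) = \<Union> (set (map fvt ts))"
| "fv (FNeg \<phi>) = fv \<phi>"
| "fv (FConj \<phi> \<psi>) = fv \<phi> \<union> fv \<psi>"
| "fv (FEx v \<phi>) = fv \<phi> - {v}"

text \<open>A structure with universe the type 'a: interpretations F of function symbols and
R of relation symbols.\<close>

primrec evalt :: "('f \<Rightarrow> 'a list \<Rightarrow> 'a) \<Rightarrow> (nat \<Rightarrow> 'a) \<Rightarrow> 'f trm \<Rightarrow> 'a" where
  "evalt F e (Var n) = e n"
| "evalt F e (Fn f ts) = F f (map (evalt F e) ts)"

primrec sat :: "('f \<Rightarrow> 'a list \<Rightarrow> 'a) \<Rightarrow> ('r \<Rightarrow> 'a list \<Rightarrow> bool) \<Rightarrow> (nat \<Rightarrow> 'a)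
                 \<Rightarrow> ('f, 'r) fm \<Rightarrow> bool" where
  "sat F R e (FEq s t) = (evalt F e s = evalt F e t)"
| "sat F R e (FRel r ts) = R r (map (evalt F e) ts)"
| "sat F R e (FNeg \<phi>) = (\<not> sat F R e \<phi>)"
| "sat F R e (FConj \<phi> \<psi>) = (sat F R e \<phi> \<and> sat F R e \<psi>)"
| "sat F R e (FEx v \<phi>) = (\<exists>a. sat F R (e(v := a)) \<phi>)"

text \<open>Monster-model hypothesis: the structure is |T|^+-saturated, i.e. every set of
formulas in the free variable 0 with parameters (the values of the other variables) from a
set A of size at most |L| + aleph_0 that is finitely satisfiable is realized.\<close>

definition saturated :: "('f \<Rightarrow> 'a list \<Rightarrow> 'a) \<Rightarrow> ('r \<Rightarrow> 'a list \<Rightarrow> bool) \<Rightarrow> bool" where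
  "saturated F R \<longleftrightarrow>
     (\<forall>(A :: 'a set) (\<Sigma> :: (('f, 'r) fm \<times> (nat \<Rightarrow> 'a)) set).
        (\<exists>g :: 'f + 'r + nat \<Rightarrow> 'a. A \<subseteq> range g) \<longrightarrow>
        (\<forall>(\<phi>, e) \<in> \<Sigma>. e ` (UNIV - {0}) \<subseteq> A) \<longrightarrow>
        (\<forall>\<Sigma>0 \<subseteq> \<Sigma>. finite \<Sigma>0 \<longrightarrow> (\<exists>a. \<forall>(\<phi>, e) \<in> \<Sigma>0. sat F R (e(0 := a)) \<phi>)) \<longrightarrow>
        (\<exists>a. \<forall>(\<phi>, e) \<in> \<Sigma>. sat F R (e(0 := a)) \<phi>))"

text \<open>Assignment for \<phi>(x, y) with x := xs (variables 0..<length xs) and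
y := bs (the following variables).\<close>

definition penv :: "'a list \<Rightarrow> 'a list \<Rightarrow> nat \<Rightarrow> 'a" where
  "penv xs bs i = (if i < length xs then xs ! i else bs ! (i - length xs))"

definition same_tp :: "('f \<Rightarrow> 'a list \<Rightarrow> 'a) \<Rightarrow> ('r \<Rightarrow> 'a list \<Rightarrow> bool)
                        \<Rightarrow> 'a list \<Rightarrow> 'a list \<Rightarrow> bool" where
  "same_tp F R as bs \<longleftrightarrow> length as = length bs \<and>
     (\<forall>\<psi> :: ('f, 'r) fm. fv \<psi> \<subseteq> {..<length as} \<longrightarrow>
        (sat F R (\<lambda>i. as ! i) \<psi> \<longleftrightarrow> sat F R (\<lambda>i. bs ! i) \<psi>))"

section \<open>The L_0-structure on 2^{<omega} (bool list, False = 0, True = 1)\<close>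

definition lex_less :: "bool list \<Rightarrow> bool list \<Rightarrow> bool" where
  "lex_less \<eta> \<nu> \<longleftrightarrow> strict_prefix \<eta> \<nu> \<or>
     (\<exists>w u v. \<eta> = w @ False # u \<and> \<nu> = w @ True # v)"

definition meet :: "bool list \<Rightarrow> bool list \<Rightarrow> bool list" where
  "meet \<eta> \<nu> = longest_common_prefix \<eta> \<nu>"

datatype mtrm = MV nat | MMeet mtrm mtrm

primrec meval :: "bool list list \<Rightarrow> mtrm \<Rightarrow> bool list" where
  "meval \<eta>s (MV i) = \<eta>s ! i"
| "meval \<eta>s (MMeet s t) = meet (meval \<eta>s s) (meval \<eta>s t)"

primrec mvars :: "mtrm \<Rightarrow> nat set" where
  "mvars (MV i) = {i}"
| "mvars (MMeet s t) = mvars s \<union> mvars t"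

definition qftp_eq :: "bool list list \<Rightarrow> bool list list \<Rightarrow> bool" where
  "qftp_eq \<eta>s \<nu>s \<longleftrightarrow> length \<eta>s = length \<nu>s \<and>
     (\<forall>s t. mvars s \<union> mvars t \<subseteq> {..<length \<eta>s} \<longrightarrow>
        (meval \<eta>s s = meval \<eta>s t \<longleftrightarrow> meval \<nu>s s = meval \<nu>s t) \<and>
        (strict_prefix (meval \<eta>s s) (meval \<eta>s t) \<longleftrightarrow> strict_prefix (meval \<nu>s s) (meval \<nu>s t)) \<and>
        (lex_less (meval \<eta>s s) (meval \<eta>s t) \<longleftrightarrow> lex_less (meval \<nu>s s) (meval \<nu>s t)))"

definition strongly_indiscernible ::
  "('f \<Rightarrow> 'a list \<Rightarrow> 'a) \<Rightarrow> ('r \<Rightarrow> 'a list \<Rightarrow> bool) \<Rightarrow> (bool list \<Rightarrow> 'a list) \<Rightarrow> bool" where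
  "strongly_indiscernible F R a \<longleftrightarrow>
     (\<forall>\<eta>s \<nu>s. qftp_eq \<eta>s \<nu>s \<longrightarrow> same_tp F R (concat (map a \<eta>s)) (concat (map a \<nu>s)))"

section \<open>SOP_2 (witnessed in the monster model; consistency = finite satisfiability)\<close>

definition has_SOP2 :: "('f \<Rightarrow> 'a list \<Rightarrow> 'a) \<Rightarrow> ('r \<Rightarrow> 'a list \<Rightarrow> bool) \<Rightarrow> bool" where
  "has_SOP2 F R \<longleftrightarrow>
     (\<exists>(\<phi> :: ('f, 'r) fm) (n :: nat) (m :: nat) (b :: bool list \<Rightarrow> 'a list).
        fv \<phi> \<subseteq> {..<n + m} \<and> (\<forall>\<eta>. length (b \<eta>) = m) \<and>
        (\<forall>\<xi> :: nat \<Rightarrow> bool. \<forall>K :: nat set. finite K \<longrightarrow>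
           (\<exists>xs. length xs = n \<and> (\<forall>k\<in>K. sat F R (penv xs (b (map \<xi> [0..<k]))) \<phi>))) \<and>
        (\<forall>\<eta> \<nu>. \<not> prefix \<eta> \<nu> \<and> \<not> prefix \<nu> \<eta> \<longrightarrow>
           \<not> (\<exists>xs. length xs = n \<and> sat F R (penv xs (b \<eta>)) \<phi> \<and> sat F R (penv xs (b \<nu>)) \<phi>)))"

end

theory Submission
  imports Defs "HOL-Library.List_Lexorder"
begin

lemma lex_less_iff: "lex_less u v \<longleftrightarrow> u < v"
proof -
  have "u < v \<longleftrightarrow> ord_class.lexordp u v" by (simp add: list_less_def lexordp_conv_lexord)
  also have "\<dots> \<longleftrightarrow> lex_less u v"
  proof -
    have b: "\<And>a b::bool. a < b \<longleftrightarrow> a = False \<and> b = True" by auto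
    have sp: "strict_prefix u v \<longleftrightarrow> (\<exists>x vs. v = u @ x # vs)"
      by (metis append_Nil2 neq_Nil_conv prefix_def strict_prefix_def self_append_conv)
    show ?thesis unfolding lexordp_iff lex_less_def sp b by blast
  qed
  finally show ?thesis by simp
qed

lemma sp_less: "strict_prefix u (v::bool list) \<Longrightarrow> u < v"
  using lex_less_iff lex_less_def by blast

lemma meet_prefix: "prefix v u \<Longrightarrow> meet u v = v" "prefix u v \<Longrightarrow> meet u v = u"
  unfolding meet_def
  by (metis longest_common_prefix_max_prefix longest_common_prefix_prefix1
      longest_common_prefix_prefix2 prefix_order.antisym prefix_order.refl)+

lemma evalt_cong: "(\<forall>i\<in>fvt t. e i = e' i) \<Longrightarrow> evalt F e t = evalt F e' t"
  by (induction t) (auto intro!: arg_cong[where f="F _"])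

lemma sat_cong: "(\<forall>i\<in>fv \<phi>. e i = e' i) \<Longrightarrow> sat F R e \<phi> = sat F R e' \<phi>"
proof (induction \<phi> arbitrary: e e')
  case (FEq s t) then show ?case using evalt_cong[of s e e' F] evalt_cong[of t e e' F] by simp
next
  case (FRel r ts)
  have "map (evalt F e) ts = map (evalt F e') ts"
    using FRel by (auto intro!: evalt_cong)
  then show ?case by (simp only: sat.simps)
next
  case (FEx v \<phi>)
  have "\<And>a. sat F R (e(v:=a)) \<phi> = sat F R (e'(v:=a)) \<phi>"
    by (rule FEx.IH) (use FEx.prems in auto)
  then show ?case by simp
next
  case (FConj \<phi>1 \<phi>2)
  have "sat F R e \<phi>1 = sat F R e' \<phi>1" by (rule FConj.IH(1)) (use FConj.prems in auto)
  moreover have "sat F R e \<phi>2 = sat F R e' \<phi>2" by (rule FConj.IH(2)) (use FConj.prems in auto)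
  ultimately show ?case by simp
qed auto

primrec rent :: "(nat \<Rightarrow> nat) \<Rightarrow> 'f trm \<Rightarrow> 'f trm" where
  "rent f (Var n) = Var (f n)"
| "rent f (Fn g ts) = Fn g (map (rent f) ts)"

primrec ren :: "(nat \<Rightarrow> nat) \<Rightarrow> ('f,'r) fm \<Rightarrow> ('f,'r) fm" where
  "ren f (FEq s t) = FEq (rent f s) (rent f t)"
| "ren f (FRel r ts) = FRel r (map (rent f) ts)"
| "ren f (FNeg \<phi>) = FNeg (ren f \<phi>)"
| "ren f (FConj \<phi> \<psi>) = FConj (ren f \<phi>) (ren f \<psi>)"
| "ren f (FEx v \<phi>) = FEx (f v) (ren f \<phi>)"

lemma evalt_rent: "evalt F e (rent f t) = evalt F (e \<circ> f) t"
  by (induction t) (auto intro!: arg_cong[where f="F _"])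

lemma fvt_rent: "fvt (rent f t) = f ` fvt t"
  by (induction t) auto

lemma sat_ren: "inj f \<Longrightarrow> sat F R e (ren f \<phi>) = sat F R (e \<circ> f) \<phi>"
proof (induction \<phi> arbitrary: e)
  case (FEx v \<phi>)
  have "\<And>a. (e(f v := a)) \<circ> f = (e \<circ> f)(v := a)"
    using FEx.prems by (auto simp: inj_eq)
  then show ?case by (simp only: ren.simps sat.simps FEx.IH[OF FEx.prems])
qed (auto simp: evalt_rent comp_def)

lemma fv_ren: "fv (ren f \<phi>) \<subseteq> f ` fv \<phi>"
  by (induction \<phi>) (auto simp: fvt_rent)

lemma sat_exs: "sat F R e (foldr FEx vs \<psi>) \<longleftrightarrow> (\<exists>g. sat F R (\<lambda>i. if i \<in> set vs then g i else e i) \<psi>)"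
proof (induction vs arbitrary: e)
  case Nil then show ?case by simp
next
  case (Cons v vs)
  show ?case
  proof
    assume "sat F R e (foldr FEx (v # vs) \<psi>)"
    then obtain a g where "sat F R (\<lambda>i. if i \<in> set vs then g i else (e(v:=a)) i) \<psi>"
      using Cons by auto
    moreover have "(\<lambda>i. if i \<in> set vs then g i else (e(v:=a)) i) =
       (\<lambda>i. if i \<in> set (v#vs) then (if i \<in> set vs then g i else a) else e i)" by auto
    ultimately show "\<exists>g. sat F R (\<lambda>i. if i \<in> set (v#vs) then g i else e i) \<psi>" by metis
  next
    assume "\<exists>g. sat F R (\<lambda>i. if i \<in> set (v#vs) then g i else e i) \<psi>"
    then obtain g where g: "sat F R (\<lambda>i. if i \<in> set (v#vs) then g i else e i) \<psi>" by auto
    have "(\<lambda>i. if i \<in> set vs then g i else (e(v:=g v)) i) =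
       (\<lambda>i. if i \<in> set (v#vs) then g i else e i)" by auto
    then have "sat F R (e(v := g v)) (foldr FEx vs \<psi>)" using g Cons by metis
    then show "sat F R e (foldr FEx (v # vs) \<psi>)" by auto
  qed
qed

lemma fv_exs: "fv (foldr FEx vs \<psi>) = fv \<psi> - set vs"
  by (induction vs) auto

definition CONJ :: "('f,'r) fm list \<Rightarrow> ('f,'r) fm" where
  "CONJ l = foldr FConj l (FEq (Var 0) (Var 0))"

lemma sat_CONJ: "sat F R e (CONJ l) \<longleftrightarrow> (\<forall>\<phi>\<in>set l. sat F R e \<phi>)"
  unfolding CONJ_def by (induction l) auto

lemma fv_CONJ: "fv (CONJ l) \<subseteq> {0} \<union> \<Union> (fv ` set l)"
  unfolding CONJ_def by (induction l) auto

lemma concat_nth_block: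
  "(\<forall>x\<in>set xss. length x = n) \<Longrightarrow> j < length xss \<Longrightarrow> r < n \<Longrightarrow> concat xss ! (j*n + r) = xss!j!r"
proof (induction xss arbitrary: j)
  case Nil then show ?case by simp
next
  case (Cons x xs)
  show ?case
  proof (cases j)
    case 0 then show ?thesis using Cons.prems by (simp add: nth_append)
  next
    case (Suc j')
    have "concat (x#xs) ! (j*n + r) = concat xs ! (j'*n+r)"
      using Cons.prems Suc by (simp add: nth_append algebra_simps)
    then show ?thesis using Cons Suc by simp
  qed
qed

definition hh :: "nat \<Rightarrow> nat \<Rightarrow> nat \<Rightarrow> nat" where
  "hh L n i = (if i < n then L + i else if i < n + L then i - n else i)"

lemma inj_hh: "inj (hh L n)"
  unfolding inj_def hh_def by (auto split: if_splits)

definition chi :: "nat \<Rightarrow> nat \<Rightarrow> ('f,'r) fm \<Rightarrow> ('f,'r) fm" where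
  "chi L n \<theta> = foldr FEx [L..<L+n] (ren (hh L n) \<theta>)"

lemma fv_chi: "fv \<theta> \<subseteq> {..<n + L} \<Longrightarrow> fv (chi L n \<theta>) \<subseteq> {..<L}"
proof -
  assume a: "fv \<theta> \<subseteq> {..<n + L}"
  have "fv (ren (hh L n) \<theta>) \<subseteq> hh L n ` {..<n+L}" using fv_ren a by blast
  also have "\<dots> \<subseteq> {..<L} \<union> {L..<L+n}" unfolding hh_def by auto
  finally show ?thesis unfolding chi_def fv_exs by auto
qed

lemma sat_chi:
  assumes "fv \<theta> \<subseteq> {..<n + length cs}"
  shows "sat F R (\<lambda>i. cs!i) (chi (length cs) n \<theta>) \<longleftrightarrow> (\<exists>xs. length xs = n \<and> sat F R (penv xs cs) \<theta>)"
proof -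
  let ?L = "length cs"
  let ?E = "\<lambda>g i. if i \<in> set [?L..<?L+n] then g i else cs!i"
  have "sat F R (\<lambda>i. cs!i) (chi ?L n \<theta>) \<longleftrightarrow> (\<exists>g. sat F R (?E g \<circ> hh ?L n) \<theta>)"
    unfolding chi_def sat_exs sat_ren[OF inj_hh] ..
  also have "\<dots> \<longleftrightarrow> (\<exists>xs. length xs = n \<and> sat F R (penv xs cs) \<theta>)"
  proof
    assume "\<exists>g. sat F R (?E g \<circ> hh ?L n) \<theta>"
    then obtain g where g: "sat F R (?E g \<circ> hh ?L n) \<theta>" by blast
    let ?xs = "map (\<lambda>i. g (?L + i)) [0..<n]"
    have "\<forall>i\<in>fv \<theta>. (?E g \<circ> hh ?L n) i = penv ?xs cs i"
    proof
      fix i assume "i \<in> fv \<theta>"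
      then have i: "i < n + ?L" using assms by auto
      show "(?E g \<circ> hh ?L n) i = penv ?xs cs i"
      proof (cases "i < n")
        case True then show ?thesis by (simp add: hh_def penv_def)
      next
        case False then show ?thesis using i by (auto simp add: hh_def penv_def)
      qed
    qed
    then have "sat F R (?E g \<circ> hh ?L n) \<theta> = sat F R (penv ?xs cs) \<theta>" by (rule sat_cong)
    then have "sat F R (penv ?xs cs) \<theta>" using g by simp
    then show "\<exists>xs. length xs = n \<and> sat F R (penv xs cs) \<theta>" by (intro exI[of _ ?xs]) simp
  next
    assume "\<exists>xs. length xs = n \<and> sat F R (penv xs cs) \<theta>"
    then obtain xs where xs: "length xs = n" "sat F R (penv xs cs) \<theta>" by blast
    let ?g = "\<lambda>i. xs ! (i - ?L)"
    have "\<forall>i\<in>fv \<theta>. (?E ?g \<circ> hh ?L n) i = penv xs cs i"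
    proof
      fix i assume "i \<in> fv \<theta>"
      then have i: "i < n + ?L" using assms by auto
      show "(?E ?g \<circ> hh ?L n) i = penv xs cs i"
      proof (cases "i < n")
        case True then show ?thesis using xs(1) by (simp add: hh_def penv_def)
      next
        case False then show ?thesis using i xs(1) by (auto simp add: hh_def penv_def)
      qed
    qed
    then have "sat F R (?E ?g \<circ> hh ?L n) \<theta> = sat F R (penv xs cs) \<theta>" by (rule sat_cong)
    then have "sat F R (?E ?g \<circ> hh ?L n) \<theta>" using xs(2) by simp
    then show "\<exists>g. sat F R (?E g \<circ> hh ?L n) \<theta>" by (rule exI[of _ ?g])
  qed
  finally show ?thesis .
qed

lemma transfer:
  assumes "same_tp F R cs ds" "fv \<theta> \<subseteq> {..<n + length cs}"
    "\<exists>xs. length xs = n \<and> sat F R (penv xs cs) \<theta>"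
  shows "\<exists>xs. length xs = n \<and> sat F R (penv xs ds) \<theta>"
proof -
  have len: "length ds = length cs" using assms(1) unfolding same_tp_def by simp
  have "sat F R (\<lambda>i. cs!i) (chi (length cs) n \<theta>)" using sat_chi[OF assms(2)] assms(3) by blast
  moreover have "fv (chi (length cs) n \<theta>) \<subseteq> {..<length cs}" using fv_chi assms(2) by blast
  ultimately have "sat F R (\<lambda>i. ds!i) (chi (length cs) n \<theta>)"
    using assms(1) unfolding same_tp_def by blast
  then show ?thesis using sat_chi[of \<theta> n ds] assms(2) len by (simp only:)
qed

primrec mlen :: "nat list \<Rightarrow> mtrm \<Rightarrow> nat" where
  "mlen ls (MV i) = ls ! i"
| "mlen ls (MMeet s t) = min (mlen ls s) (mlen ls t)"

lemma pw_le: "prefix u w \<Longrightarrow> prefix v w \<Longrightarrow> length u \<le> length v \<Longrightarrow> prefix u v"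
  by (rule prefix_length_prefix)

lemma pw_eq: "prefix u w \<Longrightarrow> prefix v w \<Longrightarrow> (u = v \<longleftrightarrow> length u = length v)"
  by (metis pw_le order_refl prefix_order.antisym)

lemma pw_sp: "prefix u w \<Longrightarrow> prefix v w \<Longrightarrow> (strict_prefix u v \<longleftrightarrow> length u < length v)"
  by (metis pw_le pw_eq linorder_not_le prefix_length_le strict_prefix_def order_less_le)

lemma pw_lex: "prefix u w \<Longrightarrow> prefix v (w::bool list) \<Longrightarrow> (lex_less u v \<longleftrightarrow> length u < length v)"
proof -
  assume a: "prefix u w" "prefix v w"
  show ?thesis
  proof (cases "length u < length v")
    case True then show ?thesis using a pw_sp sp_less lex_less_iff by blast
  next
    case False
    then have "prefix v u" using pw_le[OF a(2) a(1)] by simp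
    then have "v = u \<or> strict_prefix v u" by (auto simp: strict_prefix_def)
    then have "\<not> u < v" using sp_less by (metis less_irrefl less_not_sym)
    then show ?thesis using False lex_less_iff by simp
  qed
qed

lemma meval_chain:
  assumes "\<forall>u\<in>set \<eta>s. prefix u w"
  shows "mvars s \<subseteq> {..<length \<eta>s} \<Longrightarrow> prefix (meval \<eta>s s) w \<and> length (meval \<eta>s s) = mlen (map length \<eta>s) s"
proof (induction s)
  case (MV i) then show ?case using assms by auto
next
  case (MMeet s t)
  then have s: "prefix (meval \<eta>s s) w" "length (meval \<eta>s s) = mlen (map length \<eta>s) s"
    and t: "prefix (meval \<eta>s t) w" "length (meval \<eta>s t) = mlen (map length \<eta>s) t" by auto
  show ?case
  proof (cases "length (meval \<eta>s s) \<le> length (meval \<eta>s t)")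
    case True
    then have "meval \<eta>s (MMeet s t) = meval \<eta>s s"
      using pw_le[OF s(1) t(1)] meet_prefix(2) by simp
    then show ?thesis using s t True by simp
  next
    case False
    then have "meval \<eta>s (MMeet s t) = meval \<eta>s t"
      using pw_le[OF t(1) s(1)] meet_prefix(1) by simp
    then show ?thesis using s t False by simp
  qed
qed

lemma qftp_chain:
  assumes "\<forall>u\<in>set \<eta>s. prefix u w" "\<forall>u\<in>set \<nu>s. prefix u w'" "map length \<eta>s = map length \<nu>s"
  shows "qftp_eq \<eta>s \<nu>s"
proof -
  have len: "length \<eta>s = length \<nu>s" using assms(3) map_eq_imp_length_eq by blast
  show ?thesis unfolding qftp_eq_def
  proof (intro conjI allI impI len)
    fix s t assume st: "mvars s \<union> mvars t \<subseteq> {..<length \<eta>s}"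
    have a1: "prefix (meval \<eta>s s) w" "length (meval \<eta>s s) = mlen (map length \<eta>s) s"
      using meval_chain[OF assms(1)] st by auto
    have a2: "prefix (meval \<eta>s t) w" "length (meval \<eta>s t) = mlen (map length \<eta>s) t"
      using meval_chain[OF assms(1)] st by auto
    have b1: "prefix (meval \<nu>s s) w'" "length (meval \<nu>s s) = mlen (map length \<eta>s) s"
      using meval_chain[OF assms(2)] st len assms(3) by auto
    have b2: "prefix (meval \<nu>s t) w'" "length (meval \<nu>s t) = mlen (map length \<eta>s) t"
      using meval_chain[OF assms(2)] st len assms(3) by auto
    show "(meval \<eta>s s = meval \<eta>s t) = (meval \<nu>s s = meval \<nu>s t)"
      using pw_eq[OF a1(1) a2(1)] pw_eq[OF b1(1) b2(1)] a1 a2 b1 b2 by simp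
    show "strict_prefix (meval \<eta>s s) (meval \<eta>s t) = strict_prefix (meval \<nu>s s) (meval \<nu>s t)"
      using pw_sp[OF a1(1) a2(1)] pw_sp[OF b1(1) b2(1)] a1 a2 b1 b2 by simp
    show "lex_less (meval \<eta>s s) (meval \<eta>s t) = lex_less (meval \<nu>s s) (meval \<nu>s t)"
      using pw_lex[OF a1(1) a2(1)] pw_lex[OF b1(1) b2(1)] a1 a2 b1 b2 by simp
  qed
qed

lemma meet_comm: "meet u v = meet v u"
  unfolding meet_def
  by (metis longest_common_prefix_max_prefix longest_common_prefix_prefix1
      longest_common_prefix_prefix2 prefix_order.antisym)

lemma meet_idem: "meet u u = u" using meet_prefix(1) by blast

primrec cd :: "mtrm \<Rightarrow> nat" where
  "cd (MV i) = i"
| "cd (MMeet s t) = (if cd s = cd t then cd s else 2)"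

lemma three: "(x::nat) < 3 \<Longrightarrow> x = 0 \<or> x = 1 \<or> x = 2" by auto

lemma meval_pair:
  assumes "\<not> prefix \<eta> \<nu>" "\<not> prefix \<nu> \<eta>"
  shows "mvars s \<subseteq> {..<2} \<Longrightarrow> cd s < 3 \<and> meval [\<eta>,\<nu>] s = [\<eta>,\<nu>,meet \<eta> \<nu>] ! cd s"
proof (induction s)
  case (MV i) then show ?case by (auto simp: less_2_cases_iff)
next
  case (MMeet s t)
  then have s: "cd s < 3" "meval [\<eta>,\<nu>] s = [\<eta>,\<nu>,meet \<eta> \<nu>] ! cd s"
    and t: "cd t < 3" "meval [\<eta>,\<nu>] t = [\<eta>,\<nu>,meet \<eta> \<nu>] ! cd t" by auto
  have p1: "prefix (meet \<eta> \<nu>) \<eta>" "prefix (meet \<eta> \<nu>) \<nu>"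
    unfolding meet_def by (rule longest_common_prefix_prefix1, rule longest_common_prefix_prefix2)
  have m: "meet \<eta> (meet \<eta> \<nu>) = meet \<eta> \<nu>" "meet \<nu> (meet \<eta> \<nu>) = meet \<eta> \<nu>"
    "meet (meet \<eta> \<nu>) \<eta> = meet \<eta> \<nu>" "meet (meet \<eta> \<nu>) \<nu> = meet \<eta> \<nu>"
    "meet \<nu> \<eta> = meet \<eta> \<nu>"
    using meet_prefix(1)[OF p1(1)] meet_prefix(1)[OF p1(2)] meet_prefix(2)[OF p1(1)]
      meet_prefix(2)[OF p1(2)] meet_comm by metis+
  show ?case using three[OF s(1)] three[OF t(1)] s t m
    by (auto simp: meet_idem)
qed

lemma pair_facts:
  assumes "\<not> prefix \<eta> \<nu>" "\<not> prefix \<nu> \<eta>" "lex_less \<eta> \<nu>"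
  shows "x < 3 \<Longrightarrow> y < 3 \<Longrightarrow>
    ([\<eta>,\<nu>,meet \<eta> \<nu>] ! x = [\<eta>,\<nu>,meet \<eta> \<nu>] ! y \<longleftrightarrow> x = y) \<and>
    (strict_prefix ([\<eta>,\<nu>,meet \<eta> \<nu>] ! x) ([\<eta>,\<nu>,meet \<eta> \<nu>] ! y) \<longleftrightarrow> x = 2 \<and> y \<noteq> 2) \<and>
    (lex_less ([\<eta>,\<nu>,meet \<eta> \<nu>] ! x) ([\<eta>,\<nu>,meet \<eta> \<nu>] ! y) \<longleftrightarrow> (x = 2 \<and> y \<noteq> 2) \<or> (x = 0 \<and> y = 1))"
proof -
  assume x: "x < 3" and y: "y < 3"
  let ?m = "meet \<eta> \<nu>"
  have p1: "prefix ?m \<eta>" "prefix ?m \<nu>"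
    unfolding meet_def by (rule longest_common_prefix_prefix1, rule longest_common_prefix_prefix2)
  have ne: "\<eta> \<noteq> \<nu>" "?m \<noteq> \<eta>" "?m \<noteq> \<nu>" using assms p1 by auto
  have sp: "strict_prefix ?m \<eta>" "strict_prefix ?m \<nu>" using p1 ne by auto
  have nsp: "\<not> strict_prefix \<eta> \<nu>" "\<not> strict_prefix \<nu> \<eta>" "\<not> strict_prefix \<eta> ?m" "\<not> strict_prefix \<nu> ?m"
    using assms p1 by (auto dest: prefix_order.less_imp_le intro: prefix_order.trans)
  have lt: "\<eta> < \<nu>" "?m < \<eta>" "?m < \<nu>" using assms(3) lex_less_iff sp sp_less by auto
  have nlt: "\<not> \<nu> < \<eta>" "\<not> \<eta> < ?m" "\<not> \<nu> < ?m" using lt by auto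
  show ?thesis using three[OF x] three[OF y] ne ne[symmetric] sp nsp lt nlt
    by (auto simp: lex_less_iff)
qed

lemma qftp_pair:
  assumes "\<not> prefix \<eta> \<nu>" "\<not> prefix \<nu> \<eta>" "lex_less \<eta> \<nu>"
    "\<not> prefix \<eta>' \<nu>'" "\<not> prefix \<nu>' \<eta>'" "lex_less \<eta>' \<nu>'"
  shows "qftp_eq [\<eta>,\<nu>] [\<eta>',\<nu>']"
  unfolding qftp_eq_def
proof (intro conjI allI impI)
  fix s t assume st0: "mvars s \<union> mvars t \<subseteq> {..<length [\<eta>,\<nu>]}"
  have st: "mvars s \<subseteq> {..<2}" "mvars t \<subseteq> {..<2}" using st0 by auto
  have a: "cd s < 3" "meval [\<eta>,\<nu>] s = [\<eta>,\<nu>,meet \<eta> \<nu>] ! cd s"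
    "cd t < 3" "meval [\<eta>,\<nu>] t = [\<eta>,\<nu>,meet \<eta> \<nu>] ! cd t"
    using meval_pair[OF assms(1,2)] st by auto
  have b: "meval [\<eta>',\<nu>'] s = [\<eta>',\<nu>',meet \<eta>' \<nu>'] ! cd s"
    "meval [\<eta>',\<nu>'] t = [\<eta>',\<nu>',meet \<eta>' \<nu>'] ! cd t"
    using meval_pair[OF assms(4,5)] st by auto
  note P1 = pair_facts[OF assms(1-3) a(1) a(3)]
  note P2 = pair_facts[OF assms(4-6) a(1) a(3)]
  show "(meval [\<eta>,\<nu>] s = meval [\<eta>,\<nu>] t) = (meval [\<eta>',\<nu>'] s = meval [\<eta>',\<nu>'] t)"
    using P1 P2 a b by simp
  show "strict_prefix (meval [\<eta>,\<nu>] s) (meval [\<eta>,\<nu>] t) = strict_prefix (meval [\<eta>',\<nu>'] s) (meval [\<eta>',\<nu>'] t)"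
    using P1 P2 a b by simp
  show "lex_less (meval [\<eta>,\<nu>] s) (meval [\<eta>,\<nu>] t) = lex_less (meval [\<eta>',\<nu>'] s) (meval [\<eta>',\<nu>'] t)"
    using P1 P2 a b by simp
qed simp

lemma incomp_lex: "\<not> prefix \<eta> \<nu> \<Longrightarrow> \<not> prefix \<nu> \<eta> \<Longrightarrow> lex_less \<eta> \<nu> \<or> lex_less \<nu> \<eta>"
  by (metis lex_less_iff neq_iff prefix_order.refl)

lemma blk_bound: "(j::nat) < p \<Longrightarrow> i < n \<Longrightarrow> j*n + i < p*n"
proof -
  assume "j < p" "i < n"
  then have "j*n + i < Suc j * n" by simp
  also have "\<dots> \<le> p * n" using \<open>j < p\<close> by (intro mult_le_mono1) simp
  finally show ?thesis .
qed

definition fj :: "nat \<Rightarrow> nat \<Rightarrow> nat \<Rightarrow> nat \<Rightarrow> nat" where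
  "fj p n j i = (if i < n then j*n + i else i - n + p*n)"

lemma inj_fj: assumes "j < p" shows "inj (fj p n j)"
proof (rule injI)
  fix x y assume e: "fj p n j x = fj p n j y"
  have bb: "\<And>i. i < n \<Longrightarrow> j*n+i < p*n" using blk_bound[OF assms] by blast
  show "x = y"
  proof (cases "x < n"; cases "y < n")
    assume "x < n" "\<not> y < n" then show ?thesis using e bb[of x] by (simp add: fj_def)
  next
    assume "\<not> x < n" "y < n" then show ?thesis using e bb[of y] by (simp add: fj_def)
  qed (use e in \<open>auto simp: fj_def\<close>)
qed

definition blk :: "nat \<Rightarrow> nat \<Rightarrow> 'a list \<Rightarrow> 'a list" where
  "blk n j xs = map (\<lambda>i. xs ! (j*n+i)) [0..<n]"

definition Dg :: "nat \<Rightarrow> nat \<Rightarrow> nat \<Rightarrow> ('f,'r) fm" where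
  "Dg n j k = FNeg (CONJ (map (\<lambda>i. FEq (Var (j*n+i)) (Var (k*n+i))) [0..<n]))"

definition psi :: "nat \<Rightarrow> nat \<Rightarrow> ('f,'r) fm \<Rightarrow> ('f,'r) fm" where
  "psi p n \<phi> = FConj (CONJ (map (\<lambda>j. ren (fj p n j) \<phi>) [0..<p]))
      (CONJ (concat (map (\<lambda>j. map (Dg n j) [Suc j..<p]) [0..<p])))"

lemma sat_ren_fj:
  assumes "length xs = p*n" "length b = m" "fv \<phi> \<subseteq> {..<n+m}" "j < p"
  shows "sat F R (penv xs b) (ren (fj p n j) \<phi>) \<longleftrightarrow> sat F R (penv (blk n j xs) b) \<phi>"
proof -
  have "sat F R (penv xs b) (ren (fj p n j) \<phi>) = sat F R (penv xs b \<circ> fj p n j) \<phi>"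
    using sat_ren[OF inj_fj[OF assms(4)]] .
  also have "\<dots> = sat F R (penv (blk n j xs) b) \<phi>"
  proof (rule sat_cong, rule ballI)
    fix i assume "i \<in> fv \<phi>"
    then have i: "i < n + m" using assms(3) by auto
    show "(penv xs b \<circ> fj p n j) i = penv (blk n j xs) b i"
    proof (cases "i < n")
      case True
      then show ?thesis using blk_bound[OF assms(4) True] assms(1)
        by (simp add: fj_def penv_def blk_def)
    next
      case False
      have l: "length (blk n j xs) = n" by (simp add: blk_def)
      have "fj p n j i = i - n + p*n" using False by (simp add: fj_def)
      moreover have "penv xs b (i - n + p*n) = b ! (i - n)" using assms(1) by (simp add: penv_def)
      moreover have "penv (blk n j xs) b i = b ! (i - n)" using False l by (simp add: penv_def)
      ultimately show ?thesis by simp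
    qed
  qed
  finally show ?thesis .
qed

lemma sat_Dg:
  assumes "length xs = p*n" "j < p" "k < p"
  shows "sat F R (penv xs b) (Dg n j k) \<longleftrightarrow> blk n j xs \<noteq> blk n k xs"
proof -
  have "sat F R (penv xs b) (Dg n j k) \<longleftrightarrow> \<not> (\<forall>i<n. xs!(j*n+i) = xs!(k*n+i))"
    unfolding Dg_def using blk_bound[OF assms(2)] blk_bound[OF assms(3)] assms(1)
    by (auto simp: sat_CONJ penv_def)
  also have "\<dots> \<longleftrightarrow> blk n j xs \<noteq> blk n k xs"
    unfolding blk_def map_eq_conv by auto
  finally show ?thesis .
qed

lemma sat_psi:
  assumes "length xs = p*n" "length b = m" "fv \<phi> \<subseteq> {..<n+m}"
  shows "sat F R (penv xs b) (psi p n \<phi>) \<longleftrightarrow>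
     (\<forall>j<p. sat F R (penv (blk n j xs) b) \<phi>) \<and> (\<forall>j k. j < k \<and> k < p \<longrightarrow> blk n j xs \<noteq> blk n k xs)"
proof -
  have 1: "sat F R (penv xs b) (CONJ (map (\<lambda>j. ren (fj p n j) \<phi>) [0..<p])) \<longleftrightarrow>
      (\<forall>j<p. sat F R (penv (blk n j xs) b) \<phi>)"
    using sat_ren_fj[OF assms] by (auto simp: sat_CONJ)
  have 2: "sat F R (penv xs b) (CONJ (concat (map (\<lambda>j. map (Dg n j) [Suc j..<p]) [0..<p]))) \<longleftrightarrow>
      (\<forall>j k. j < k \<and> k < p \<longrightarrow> blk n j xs \<noteq> blk n k xs)"
  proof -
    have "sat F R (penv xs b) (CONJ (concat (map (\<lambda>j. map (Dg n j) [Suc j..<p]) [0..<p]))) \<longleftrightarrow>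
       (\<forall>j k. j < k \<and> k < p \<longrightarrow> sat F R (penv xs b) (Dg n j k))"
      unfolding sat_CONJ by (auto simp: Bex_def)
    also have "\<dots> \<longleftrightarrow> (\<forall>j k. j < k \<and> k < p \<longrightarrow> blk n j xs \<noteq> blk n k xs)"
    proof -
      have "\<forall>j k. j < k \<and> k < p \<longrightarrow> (sat F R (penv xs b) (Dg n j k) \<longleftrightarrow> blk n j xs \<noteq> blk n k xs)"
      proof (intro allI impI)
        fix j k assume "j < k \<and> k < p"
        then have "j < p" "k < p" by auto
        then show "sat F R (penv xs b) (Dg n j k) \<longleftrightarrow> blk n j xs \<noteq> blk n k xs"
          by (rule sat_Dg[OF assms(1)])
      qed
      then show ?thesis by blast
    qed
    finally show ?thesis .
  qed
  show ?thesis unfolding psi_def using 1 2 by simp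
qed

lemma fv_psi:
  fixes \<phi> :: "('f,'r) fm"
  assumes "fv \<phi> \<subseteq> {..<n+m}" "0 < p*n"
  shows "fv (psi p n \<phi>) \<subseteq> {..<p*n+m}"
proof -
  have a: "fv (ren (fj p n j) \<phi>) \<subseteq> {..<p*n+m}" if "j < p" for j
  proof -
    have "fv (ren (fj p n j) \<phi>) \<subseteq> fj p n j ` {..<n+m}" using fv_ren assms(1) by blast
    also have "\<dots> \<subseteq> {..<p*n+m}"
    proof
      fix x assume "x \<in> fj p n j ` {..<n+m}"
      then obtain i where i: "i < n+m" "x = fj p n j i" by auto
      show "x \<in> {..<p*n+m}"
      proof (cases "i < n")
        case True then show ?thesis using blk_bound[OF that True] i by (simp add: fj_def)
      next
        case False then show ?thesis using i by (simp add: fj_def)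
      qed
    qed
    finally show ?thesis .
  qed
  have b: "fv (Dg n j k :: ('f,'r) fm) \<subseteq> {..<p*n+m}" if "j < p" "k < p" for j k
  proof -
    let ?l = "map (\<lambda>i. FEq (Var (j*n+i)) (Var (k*n+i))) [0..<n] :: ('f,'r) fm list"
    have "fv (Dg n j k :: ('f,'r) fm) = fv (CONJ ?l)" by (simp add: Dg_def)
    also have "\<dots> \<subseteq> {0} \<union> \<Union> (fv ` set ?l)" by (rule fv_CONJ)
    also have "\<dots> \<subseteq> {..<p*n+m}"
    proof -
      have "\<Union> (fv ` set ?l) \<subseteq> {..<p*n}"
      proof
        fix x assume "x \<in> \<Union> (fv ` set ?l)"
        then obtain i where "i < n" "x = j*n+i \<or> x = k*n+i" by auto
        then show "x \<in> {..<p*n}" using blk_bound[OF that(1)] blk_bound[OF that(2)] by auto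
      qed
      then show ?thesis using assms(2) by auto
    qed
    finally show ?thesis .
  qed
  let ?A = "CONJ (map (\<lambda>j. ren (fj p n j) \<phi>) [0..<p])"
  let ?B = "CONJ (concat (map (\<lambda>j. map (Dg n j) [Suc j..<p]) [0..<p])) :: ('f,'r) fm"
  have A: "fv ?A \<subseteq> {..<p*n+m}"
  proof -
    have "fv ?A \<subseteq> {0} \<union> \<Union> (fv ` set (map (\<lambda>j. ren (fj p n j) \<phi>) [0..<p]))" by (rule fv_CONJ)
    also have "\<dots> \<subseteq> {..<p*n+m}" using a assms(2) by fastforce
    finally show ?thesis .
  qed
  have B: "fv ?B \<subseteq> {..<p*n+m}"
  proof -
    have "fv ?B \<subseteq> {0} \<union> \<Union> (fv ` set (concat (map (\<lambda>j. map (Dg n j) [Suc j..<p]) [0..<p]) :: ('f,'r) fm list))" by (rule fv_CONJ)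
    also have "\<dots> \<subseteq> {..<p*n+m}"
    proof -
      have "\<Union> (fv ` set (concat (map (\<lambda>j. map (Dg n j) [Suc j..<p]) [0..<p]) :: ('f,'r) fm list)) \<subseteq> {..<p*n+m}"
      proof
        fix x assume "x \<in> \<Union> (fv ` set (concat (map (\<lambda>j. map (Dg n j) [Suc j..<p]) [0..<p]) :: ('f,'r) fm list))"
        then obtain j k where jk: "j < p" "k < p" "x \<in> fv (Dg n j k :: ('f,'r) fm)"
          by (auto simp: Suc_le_eq) (meson order.strict_trans)
        show "x \<in> {..<p*n+m}" using b[OF jk(1,2)] jk(3) by blast
      qed
      then show ?thesis using assms(2) by auto
    qed
    finally show ?thesis .
  qed
  show ?thesis unfolding psi_def using A B by simp
qed

definition gt :: "nat \<Rightarrow> nat \<Rightarrow> nat \<Rightarrow> nat \<Rightarrow> nat" where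
  "gt N0 m t i = (if i < N0 then i else i + t*m)"

lemma inj_gt: "inj (gt N0 m t)"
  unfolding inj_def gt_def by (auto split: if_splits)

definition Theta :: "nat \<Rightarrow> nat \<Rightarrow> nat \<Rightarrow> ('f,'r) fm \<Rightarrow> ('f,'r) fm" where
  "Theta N0 m L \<psi> = CONJ (map (\<lambda>t. ren (gt N0 m t) \<psi>) [0..<L])"

lemma sat_Theta:
  assumes "length xs = N0" "\<forall>\<eta>. length (a \<eta>) = m" "fv \<psi> \<subseteq> {..<N0+m}"
  shows "sat F R (penv xs (concat (map a \<eta>s))) (Theta N0 m (length \<eta>s) \<psi>) \<longleftrightarrow>
     (\<forall>t<length \<eta>s. sat F R (penv xs (a (\<eta>s!t))) \<psi>)"
proof -
  have "sat F R (penv xs (concat (map a \<eta>s))) (ren (gt N0 m t) \<psi>) \<longleftrightarrow> sat F R (penv xs (a (\<eta>s!t))) \<psi>"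
    if t: "t < length \<eta>s" for t
  proof -
    have "sat F R (penv xs (concat (map a \<eta>s))) (ren (gt N0 m t) \<psi>) =
        sat F R (penv xs (concat (map a \<eta>s)) \<circ> gt N0 m t) \<psi>"
      using sat_ren[OF inj_gt] .
    also have "\<dots> = sat F R (penv xs (a (\<eta>s!t))) \<psi>"
    proof (rule sat_cong, rule ballI)
      fix i assume "i \<in> fv \<psi>"
      then have i: "i < N0 + m" using assms(3) by auto
      show "(penv xs (concat (map a \<eta>s)) \<circ> gt N0 m t) i = penv xs (a (\<eta>s!t)) i"
      proof (cases "i < N0")
        case True then show ?thesis using assms(1) by (simp add: gt_def penv_def)
      next
        case False
        then have e: "i + t*m - N0 = t*m + (i - N0)" by simp
        have "concat (map a \<eta>s) ! (t*m + (i - N0)) = map a \<eta>s ! t ! (i - N0)"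
          by (rule concat_nth_block) (use assms(2) t i False in auto)
        then show ?thesis using False assms(1) t e by (simp add: gt_def penv_def)
      qed
    qed
    finally show ?thesis .
  qed
  then show ?thesis unfolding Theta_def by (auto simp: sat_CONJ)
qed

lemma length_concat_const: "\<forall>x\<in>set xss. length x = n \<Longrightarrow> length (concat xss) = length xss * n"
  by (induction xss) auto

lemma fv_Theta:
  assumes "fv \<psi> \<subseteq> {..<N0+m}" "0 < N0"
  shows "fv (Theta N0 m L \<psi>) \<subseteq> {..<N0 + L*m}"
proof -
  have "fv (ren (gt N0 m t) \<psi>) \<subseteq> {..<N0 + L*m}" if "t < L" for t
  proof -
    have "fv (ren (gt N0 m t) \<psi>) \<subseteq> gt N0 m t ` {..<N0+m}" using fv_ren assms(1) by blast
    also have "\<dots> \<subseteq> {..<N0 + L*m}"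
    proof
      fix x assume "x \<in> gt N0 m t ` {..<N0+m}"
      then obtain i where i: "i < N0 + m" "x = gt N0 m t i" by auto
      have "Suc t * m \<le> L * m" using that by (intro mult_le_mono1) simp
      then show "x \<in> {..<N0 + L*m}" using i by (auto simp: gt_def)
    qed
    finally show ?thesis .
  qed
  then show ?thesis unfolding Theta_def using fv_CONJ assms(2) by fastforce
qed

theorem proposition3p1:
  fixes F :: "'f \<Rightarrow> 'a list \<Rightarrow> 'a" and R :: "'r \<Rightarrow> 'a list \<Rightarrow> bool"
    and \<phi> :: "('f, 'r) fm" and n m :: nat and a :: "bool list \<Rightarrow> 'a list"
  assumes "saturated F R"
    and "fv \<phi> \<subseteq> {..<n + m}"
    and "\<forall>\<eta>. length (a \<eta>) = m"
    and "strongly_indiscernible F R a"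
    and "infinite {xs. length xs = n \<and> (\<forall>k. sat F R (penv xs (a (replicate k False))) \<phi>)}"
    and "finite {xs. length xs = n \<and> sat F R (penv xs (a [False])) \<phi>
                                   \<and> sat F R (penv xs (a [True])) \<phi>}"
  shows "has_SOP2 F R"
proof -
  define P where "P = {xs. length xs = n \<and> (\<forall>k. sat F R (penv xs (a (replicate k False))) \<phi>)}"
  define S where "S = {xs. length xs = n \<and> sat F R (penv xs (a [False])) \<phi>
                                   \<and> sat F R (penv xs (a [True])) \<phi>}"
  have infP: "infinite P" using assms(5) P_def by simp
  have finS: "finite S" using assms(6) S_def by simp
  have n1: "0 < n"
  proof (rule ccontr)
    assume "\<not> 0 < n"
    then have "P \<subseteq> {[]}" unfolding P_def by auto
    then show False using infP finite_subset by blast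
  qed
  define p where "p = Suc (card S)"
  have pn: "0 < p*n" using n1 p_def by simp
  define \<psi> where "\<psi> = psi p n \<phi>"
  have fvpsi: "fv \<psi> \<subseteq> {..<p*n+m}" unfolding \<psi>_def by (rule fv_psi[OF assms(2) pn])
  have la: "\<And>\<eta>. length (a \<eta>) = m" using assms(3) by simp
  have SI: "\<And>\<eta>s \<nu>s. qftp_eq \<eta>s \<nu>s \<Longrightarrow> same_tp F R (concat (map a \<eta>s)) (concat (map a \<nu>s))"
    using assms(4) unfolding strongly_indiscernible_def by blast
  have lencat: "\<And>\<eta>s. length (concat (map a \<eta>s)) = length \<eta>s * m"
    by (subst length_concat_const[where n=m]) (auto simp: la)
  have fvT: "\<And>L. fv (Theta (p*n) m L \<psi>) \<subseteq> {..<p*n + L*m}"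
    by (rule fv_Theta[OF fvpsi pn])
  have path: "\<exists>xs. length xs = p*n \<and> (\<forall>k\<in>K. sat F R (penv xs (a (map \<xi> [0..<k]))) \<psi>)"
    if finK: "finite K" for \<xi> :: "nat \<Rightarrow> bool" and K
  proof -
    define ks where "ks = sorted_list_of_set K"
    have setks: "set ks = K" unfolding ks_def using finK by simp
    define \<eta>s where "\<eta>s = map (\<lambda>k. map \<xi> [0..<k]) ks"
    define \<nu>s where "\<nu>s = map (\<lambda>k. replicate k False) ks"
    define M where "M = (if K = {} then 0 else Max K)"
    have kM: "\<And>k. k \<in> K \<Longrightarrow> k \<le> M" unfolding M_def using finK by auto
    have q: "qftp_eq \<nu>s \<eta>s"
    proof (rule qftp_chain[where w="replicate M False" and w'="map \<xi> [0..<M]"])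
      show "\<forall>u\<in>set \<nu>s. prefix u (replicate M False)"
      proof
        fix u assume "u \<in> set \<nu>s"
        then obtain k where k: "k \<in> K" "u = replicate k False" unfolding \<nu>s_def setks[symmetric] by auto
        have "replicate M False = replicate k False @ replicate (M - k) False"
          using kM[OF k(1)] by (simp add: replicate_add[symmetric])
        then show "prefix u (replicate M False)" using k by (simp add: prefix_def)
      qed
      show "\<forall>u\<in>set \<eta>s. prefix u (map \<xi> [0..<M])"
      proof
        fix u assume "u \<in> set \<eta>s"
        then obtain k where k: "k \<in> K" "u = map \<xi> [0..<k]" unfolding \<eta>s_def setks[symmetric] by auto
        have "[0..<M] = [0..<k] @ [k..<M]" using kM[OF k(1)] upt_add_eq_append[of 0 k "M-k"] by simp
        then show "prefix u (map \<xi> [0..<M])" using k by (simp add: prefix_def)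
      qed
      show "map length \<nu>s = map length \<eta>s" unfolding \<nu>s_def \<eta>s_def by simp
    qed
    have st: "same_tp F R (concat (map a \<nu>s)) (concat (map a \<eta>s))" by (rule SI[OF q])
    obtain X where X: "X \<subseteq> P" "finite X" "card X = p"
      using infinite_arbitrarily_large[OF infP] by blast
    obtain xl where xl: "set xl = X" "distinct xl" using finite_distinct_list[OF X(2)] by blast
    have lxl: "length xl = p" using xl X(3) distinct_card by fastforce
    have lel: "\<forall>x\<in>set xl. length x = n" using xl X(1) unfolding P_def by auto
    define xs where "xs = concat xl"
    have lxs: "length xs = p*n" unfolding xs_def using length_concat_const[OF lel] lxl by simp
    have blkxs: "blk n j xs = xl ! j" if "j < p" for j
    proof -
      have l: "length (xl!j) = n" using lel that lxl by simp
      have "blk n j xs = map (\<lambda>i. xl!j!i) [0..<n]"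
        unfolding blk_def xs_def using concat_nth_block[OF lel] that lxl by simp
      also have "\<dots> = xl ! j" using map_nth[of "xl!j"] l by simp
      finally show ?thesis .
    qed
    have satP: "sat F R (penv xs (a (replicate k False))) \<psi>" for k
    proof -
      have "\<forall>j<p. sat F R (penv (blk n j xs) (a (replicate k False))) \<phi>"
      proof (intro allI impI)
        fix j assume j: "j < p"
        have "xl ! j \<in> P" using xl(1) X(1) j lxl by auto
        then show "sat F R (penv (blk n j xs) (a (replicate k False))) \<phi>"
          using blkxs[OF j] unfolding P_def by simp
      qed
      moreover have "\<forall>j k. j < k \<and> k < p \<longrightarrow> blk n j xs \<noteq> blk n k xs"
        using blkxs xl(2) lxl by (auto simp: nth_eq_iff_index_eq)
      ultimately show ?thesis unfolding \<psi>_def using sat_psi[OF lxs la assms(2)] by blast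
    qed
    have "sat F R (penv xs (concat (map a \<nu>s))) (Theta (p*n) m (length \<nu>s) \<psi>)"
      by (subst sat_Theta[OF lxs assms(3) fvpsi]) (simp add: \<nu>s_def satP)
    then have "\<exists>xs. length xs = p*n \<and> sat F R (penv xs (concat (map a \<nu>s))) (Theta (p*n) m (length \<nu>s) \<psi>)"
      using lxs by blast
    moreover have "fv (Theta (p*n) m (length \<nu>s) \<psi>) \<subseteq> {..<p*n + length (concat (map a \<nu>s))}"
      using fvT lencat by simp
    ultimately obtain ys where ys: "length ys = p*n"
      "sat F R (penv ys (concat (map a \<eta>s))) (Theta (p*n) m (length \<nu>s) \<psi>)"
      using transfer[OF st] by blast
    have "length \<nu>s = length \<eta>s" unfolding \<nu>s_def \<eta>s_def by simp
    then have all: "\<forall>t<length \<eta>s. sat F R (penv ys (a (\<eta>s!t))) \<psi>"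
      using ys(2) sat_Theta[OF ys(1) assms(3) fvpsi] by simp
    show ?thesis
    proof (intro exI conjI ballI)
      show "length ys = p*n" by (rule ys(1))
      fix k assume "k \<in> K"
      then obtain t where t: "t < length ks" "ks ! t = k" using setks by (auto simp: in_set_conv_nth)
      then show "sat F R (penv ys (a (map \<xi> [0..<k]))) \<psi>" using all unfolding \<eta>s_def by auto
    qed
  qed
  have key: "\<not> (\<exists>xs. length xs = p*n \<and> sat F R (penv xs (a \<eta>)) \<psi> \<and> sat F R (penv xs (a \<nu>)) \<psi>)"
    if inc: "\<not> prefix \<eta> \<nu>" "\<not> prefix \<nu> \<eta>" "lex_less \<eta> \<nu>" for \<eta> \<nu>
  proof
    assume "\<exists>xs. length xs = p*n \<and> sat F R (penv xs (a \<eta>)) \<psi> \<and> sat F R (penv xs (a \<nu>)) \<psi>"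
    then obtain xs where xs: "length xs = p*n" "sat F R (penv xs (a \<eta>)) \<psi>" "sat F R (penv xs (a \<nu>)) \<psi>"
      by blast
    have lx01: "lex_less [False] [True]" by (simp add: lex_less_iff)
    have q: "qftp_eq [\<eta>,\<nu>] [[False],[True]]"
      by (rule qftp_pair[OF inc]) (auto simp: lx01)
    have st: "same_tp F R (concat (map a [\<eta>,\<nu>])) (concat (map a [[False],[True]]))" by (rule SI[OF q])
    have t2: "\<forall>t<length [\<eta>,\<nu>]. sat F R (penv xs (a ([\<eta>,\<nu>]!t))) \<psi>"
    proof (intro allI impI)
      fix t assume "t < length [\<eta>,\<nu>]"
      then have "t = 0 \<or> t = 1" by auto
      then show "sat F R (penv xs (a ([\<eta>,\<nu>]!t))) \<psi>" using xs(2,3) by auto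
    qed
    have hs: "sat F R (penv xs (concat (map a [\<eta>,\<nu>]))) (Theta (p*n) m (length [\<eta>,\<nu>]) \<psi>)"
      by (subst sat_Theta[OF xs(1) assms(3) fvpsi]) (rule t2)
    have fvx: "fv (Theta (p*n) m (length [\<eta>,\<nu>]) \<psi>) \<subseteq> {..<p*n + length (concat (map a [\<eta>,\<nu>]))}"
      using fvT[of "length [\<eta>,\<nu>]"] unfolding lencat .
    then obtain ys where ys: "length ys = p*n"
      "sat F R (penv ys (concat (map a [[False],[True]]))) (Theta (p*n) m (length [\<eta>,\<nu>]) \<psi>)"
      using transfer[OF st fvx] xs(1) hs by blast
    have a2: "\<forall>t<2. sat F R (penv ys (a ([[False],[True]]!t))) \<psi>"
      using ys(2) sat_Theta[OF ys(1) assms(3) fvpsi, where \<eta>s="[[False],[True]]"] by simp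
    have s01: "sat F R (penv ys (a [False])) \<psi>" "sat F R (penv ys (a [True])) \<psi>"
      using spec[OF a2, of 0] spec[OF a2, of 1] by simp_all
    have b0: "(\<forall>j<p. sat F R (penv (blk n j ys) (a [False])) \<phi>) \<and> (\<forall>j k. j < k \<and> k < p \<longrightarrow> blk n j ys \<noteq> blk n k ys)"
      using s01(1) sat_psi[OF ys(1) la assms(2)] unfolding \<psi>_def by blast
    have b1: "\<forall>j<p. sat F R (penv (blk n j ys) (a [True])) \<phi>"
      using s01(2) sat_psi[OF ys(1) la assms(2)] unfolding \<psi>_def by blast
    have inj: "inj_on (\<lambda>j. blk n j ys) {..<p}"
    proof (rule inj_onI)
      fix j k assume "j \<in> {..<p}" "k \<in> {..<p}" "blk n j ys = blk n k ys"
      then show "j = k" using b0 by (metis lessThan_iff linorder_neqE_nat)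
    qed
    have sub: "(\<lambda>j. blk n j ys) ` {..<p} \<subseteq> S"
      using b0 b1 unfolding S_def by (auto simp: blk_def)
    have "card {..<p} \<le> card S" by (rule card_inj_on_le[OF inj sub finS])
    then show False unfolding p_def by simp
  qed
  show ?thesis unfolding has_SOP2_def
  proof (intro exI conjI)
    show "fv \<psi> \<subseteq> {..<p*n + m}" by (rule fvpsi)
    show "\<forall>\<eta>. length (a \<eta>) = m" by (rule assms(3))
    show "\<forall>\<xi> K. finite K \<longrightarrow> (\<exists>xs. length xs = p*n \<and> (\<forall>k\<in>K. sat F R (penv xs (a (map \<xi> [0..<k]))) \<psi>))"
      using path by blast
    show "\<forall>\<eta> \<nu>. \<not> prefix \<eta> \<nu> \<and> \<not> prefix \<nu> \<eta> \<longrightarrow>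
      \<not> (\<exists>xs. length xs = p*n \<and> sat F R (penv xs (a \<eta>)) \<psi> \<and> sat F R (penv xs (a \<nu>)) \<psi>)"
    proof (intro allI impI)
      fix \<eta> \<nu> :: "bool list" assume h: "\<not> prefix \<eta> \<nu> \<and> \<not> prefix \<nu> \<eta>"
      then have "lex_less \<eta> \<nu> \<or> lex_less \<nu> \<eta>" using incomp_lex by blast
      then show "\<not> (\<exists>xs. length xs = p*n \<and> sat F R (penv xs (a \<eta>)) \<psi> \<and> sat F R (penv xs (a \<nu>)) \<psi>)"
        using key h by blast
    qed
  qed
qed

end
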